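(* Fix constants $Q>0$, $T_1>0$, $T_2>0$, $0<\mu_i<\mu_o$, $0<R_1(0)<R_2(0)$, a positive integer $n$ and a time $\tau\ge0$. Put $R_0^2(\tau)=Q\tau/\pi$, $R_1^2(\tau)=Q\tau/\pi+R_1^2(0)$, $R_2^2(\tau)=Q\tau/\pi+R_2^2(0)$, $\zeta_1=R_1^2(0)/R_2^2(0)$. Let $\mu\in C^1([\zeta_1,1])$ satisfy $\mu_i<\mu(\zeta)<\mu_o$ on $[\zeta_1,1]$, and define $$F_1=\frac{Qn}{2\pi R_1^2(\tau)}\big(\mu(\zeta_1)-\mu_i\big)-T_1\frac{n^3-n}{R_1^3(\tau)},\qquad F_2=\frac{Qn}{2\pi R_2^2(\tau)}\big(\mu_o-\mu(1)\big)-T_2\frac{n^3-n}{R_2^3(\tau)}.$$ Suppose $\sigma\neq0$ and a nontrivial $f$ satisfy $$\Big(\big(\zeta R_2^2(0)+R_0^2(\tau)\big)\mu f'\Big)'-\frac{n^2R_2^4(0)}{4(\zeta R_2^2(0)+R_0^2(\tau))}\mu f=-\frac{Qn^2R_2^2(0)}{4\pi(\zeta R_2^2(0)+R_0^2(\tau))}\frac{1}{\sigma}\mu'f,\quad \zeta_1<\zeta<1,$$ $$\frac{2R_1^2(\tau)}{nR_2^2(0)}\mu(\zeta_1)f'(\zeta_1)=\Big(\mu_i-\frac{F_1}{\sigma}\Big)f(\zeta_1),\qquad -\frac{2R_2^2(\tau)}{nR_2^2(0)}\mu(1)f'(1)=\Big(\mu_o-\frac{F_2}{\sigma}\Big)f(1).$$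 Then $\sigma$ is real. Moreover, if $\sigma>0$, then $$\sigma<\max\left\{\frac{Qn}{2\pi R_1^2(\tau)}\frac{\mu(\zeta_1)-\mu_i}{\mu_i}-\frac{T_1}{\mu_i}\frac{n^3-n}{R_1^3(\tau)},\ \frac{Qn}{2\pi R_2^2(\tau)}\frac{\mu_o-\mu(1)}{\mu_o}-\frac{T_2}{\mu_o}\frac{n^3-n}{R_2^3(\tau)},\ \frac{Q}{\pi R_2^2(0)}\frac{1}{\mu_i}\sup_{\zeta\in(\zeta_1,1)}\mu'(\zeta)\right\},$$ and consequently, independently of $n$, $$\sigma<\max\left\{\frac{2T_1}{\mu_iR_1^3(\tau)}\Big(\frac{QR_1(\tau)}{6\pi T_1}(\mu(\zeta_1)-\mu_i)+\frac13\Big)^{3/2},\ \frac{2T_2}{\mu_oR_2^3(\tau)}\Big(\frac{QR_2(\tau)}{6\pi T_2}(\mu_o-\mu(1))+\frac13\Big)^{3/2},\ \frac{Q}{\pi R_2^2(0)}\frac{1}{\mu_i}\sup_{\zeta\in(\zeta_1,1)}\mu'(\zeta)\right\}.$$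
   Context: This is the eigenvalue problem for the growth rate $\sigma$ of a disturbance with angular wave number $n$ in the linear stability analysis (under a quasi-steady-state approximation) of three-layer radial Hele-Shaw flow, written in the transformed coordinate $\zeta=(r^2-R_0^2(\tau))/R_2^2(0)$ in which the interfaces are at $\zeta=\zeta_1$ and $\zeta=1$; $\mu_i,\mu_o$ are the constant inner/outer viscosities, $\mu(\zeta)$ the middle-layer viscous profile, $T_1,T_2$ the interfacial tensions and $Q$ the injection rate. *)

theory Defs
  imports "HOL-Analysis.Analysis"
begin

definition R0sq :: "real \<Rightarrow> real \<Rightarrow> real" where
  "R0sq Q \<tau> = Q * \<tau> / pi"

definition Rsq :: "real \<Rightarrow> real \<Rightarrow> real \<Rightarrow> real" where
  "Rsq Q \<tau> Rinit = Q * \<tau> / pi + Rinit\<^sup>2"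

definition zeta1 :: "real \<Rightarrow> real \<Rightarrow> real" where
  "zeta1 R10 R20 = R10\<^sup>2 / R20\<^sup>2"

end

theory Submission
  imports Defs
begin

lemma cont_from_deriv:
  fixes f :: "real \<Rightarrow> 'a::real_normed_vector"
  assumes "\<And>x. x \<in> S \<Longrightarrow> (f has_vector_derivative f' x) (at x within S)"
  shows "continuous_on S f"
  using assms has_vector_derivative_continuous continuous_on_eq_continuous_within by blast

lemma regularity:
  fixes f f' G :: "real \<Rightarrow> complex" and q :: "real \<Rightarrow> real"
  assumes ab: "a < b"
    and fd: "\<And>x. x \<in> {a..b} \<Longrightarrow> (f has_vector_derivative f' x) (at x within {a..b})"
    and qc: "continuous_on {a..b} q" and qp: "\<And>x. x \<in> {a..b} \<Longrightarrow> q x > 0"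
    and Gc: "continuous_on {a..b} G"
    and gd: "\<And>x. x \<in> {a<..<b} \<Longrightarrow> ((\<lambda>x. complex_of_real (q x) * f' x) has_vector_derivative G x) (at x)"
  shows "continuous_on {a..b} (\<lambda>x. complex_of_real (q x) * f' x)"
proof -
  define g where "g = (\<lambda>x. complex_of_real (q x) * f' x)"
  have gd': "\<And>x. x \<in> {a<..<b} \<Longrightarrow> (g has_vector_derivative G x) (at x)" using gd g_def by simp
  have gcont: "continuous_on {y..x} g" if "a < y" "x < b" for x y
  proof -
    have "\<And>z. z \<in> {y..x} \<Longrightarrow> (g has_vector_derivative G z) (at z within {y..x})"
      using gd' that by (auto intro: has_vector_derivative_at_within)
    then show ?thesis by (rule cont_from_deriv)
  qed
  have Gint: "G integrable_on {a..x}" if "x \<le> b" for x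
    using Gc that by (intro integrable_continuous_interval) (auto intro: continuous_on_subset)
  have step: "integral {a..x} G - integral {a..y} G = g x - g y" if "a < y" "y \<le> x" "x < b" for x y
  proof -
    have "(G has_integral g x - g y) {y..x}"
      using that by (intro fundamental_theorem_of_calculus_interior gcont gd') auto
    then have "integral {y..x} G = g x - g y" by blast
    moreover have "integral {a..y} G + integral {y..x} G = integral {a..x} G"
      by (rule Henstock_Kurzweil_Integration.integral_combine) (use that Gint[of x] in auto)
    ultimately show ?thesis by (metis add_diff_cancel_left diff_add_cancel add.commute)
  qed
  define c where "c = (a + b) / 2"
  have c: "a < c" "c < b" using ab c_def by auto
  define gh where "gh = (\<lambda>x. g c + (integral {a..x} G - integral {a..c} G))"
  have g_gh: "g x = gh x" if "x \<in> {a<..<b}" for x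
  proof (cases "c \<le> x")
    case True then show ?thesis using step[of c x] that c gh_def by auto
  next
    case False then show ?thesis using step[of x c] that c gh_def by (auto simp: algebra_simps)
  qed
  have Gi: "((\<lambda>u. integral {a..u} G) has_vector_derivative G x) (at x within {a..b})" if "x \<in> {a..b}" for x
    using integral_has_vector_derivative[OF Gc that] .
  have ghc: "continuous_on {a..b} gh"
  proof -
    have "continuous_on {a..b} (\<lambda>u. integral {a..u} G)"
      using Gi cont_from_deriv by blast
    then show ?thesis unfolding gh_def by (intro continuous_intros)
  qed
  define Fh where "Fh = (\<lambda>x. gh x / complex_of_real (q x))"
  have Fhc: "continuous_on {a..b} Fh"
    unfolding Fh_def using qp by (intro continuous_intros ghc qc) force+
  have f'Fh: "f' x = Fh x" if "x \<in> {a<..<b}" for x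
    using g_gh[OF that] qp[of x] that unfolding g_def Fh_def by (auto simp: field_simps)
  have fc: "continuous_on {a..b} f" using fd cont_from_deriv by blast
  have frep: "f x = f a + integral {a..x} Fh" if "x \<in> {a..b}" for x
  proof (cases "x = a")
    case True then show ?thesis by simp
  next
    case False
    have hf: "(f' has_integral f x - f a) {a..x}"
    proof (rule fundamental_theorem_of_calculus_interior)
      show "a \<le> x" using that by auto
      show "continuous_on {a..x} f" using fc that by (auto intro: continuous_on_subset)
      fix y assume y: "y \<in> {a<..<x}"
      then have "(f has_vector_derivative f' y) (at y within {a..b})" using fd that by auto
      then show "(f has_vector_derivative f' y) (at y)"
        using y that at_within_interior[of y "{a..b}"] by (auto simp: has_vector_derivative_def)
    qed
    have "(Fh has_integral f x - f a) {a..x}"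
      by (rule has_integral_spike_finite[where S="{a,x}", OF _ _ hf]) (use f'Fh that in auto)
    then show ?thesis by (simp add: integral_unique)
  qed
  have f'eq: "f' x = Fh x" if x: "x \<in> {a..b}" for x
  proof -
    have hd: "((\<lambda>u. f a + integral {a..u} Fh) has_vector_derivative Fh x) (at x within {a..b})"
      using has_vector_derivative_add[OF has_vector_derivative_const[of "f a"] integral_has_vector_derivative[OF Fhc x]] by simp
    have hF: "(f has_vector_derivative Fh x) (at x within {a..b})"
      by (rule has_vector_derivative_transform[OF x _ hd]) (erule frep)
    have xc: "x \<in> cbox a b" using x by (simp add: cbox_interval)
    show ?thesis
      using vector_derivative_unique_within_closed_interval[OF ab xc] fd[OF x] hF by (simp only: cbox_interval)
  qed
  have "g x = gh x" if "x \<in> {a..b}" for x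
    using f'eq[OF that] qp[OF that] unfolding g_def Fh_def by auto
  then show ?thesis using continuous_on_eq[OF ghc, of g] unfolding g_def by simp
qed

lemma integral_pos:
  fixes \<phi> :: "real \<Rightarrow> real"
  assumes ab: "a < b" and c: "continuous_on {a..b} \<phi>" and nn: "\<And>x. x \<in> {a..b} \<Longrightarrow> 0 \<le> \<phi> x"
    and z: "z \<in> {a..b}" "\<phi> z \<noteq> 0" and I: "(\<phi> has_integral I) {a..b}"
  shows "I > 0"
proof -
  have "I \<ge> 0" using has_integral_nonneg[OF I] nn by blast
  moreover have "I \<noteq> 0"
  proof
    assume "I = 0"
    then have "\<phi> z = 0"
      using has_integral_0_cbox_imp_0[of a b \<phi> z] c nn I z ab by (auto simp: cbox_interval box_real)
    then show False using z by simp
  qed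
  ultimately show ?thesis by simp
qed

lemma cubic_bound:
  fixes c x :: real
  assumes "c \<ge> 0" "x \<ge> 0"
  shows "(3*c+1)*x - x^3 \<le> 2*(c+1/3) powr (3/2)"
proof -
  define y where "y = sqrt (c + 1/3)"
  have y0: "y \<ge> 0" using y_def assms(1) by simp
  have y2: "y^2 = c + 1/3" using y_def assms(1) by (simp add: add_nonneg_nonneg)
  have "(c+1/3) powr (3/2) = (c+1/3) powr 1 * (c+1/3) powr (1/2)"
    by (subst powr_add[symmetric]) simp
  also have "\<dots> = y^3" using assms y2 y_def by (simp add: powr_half_sqrt power3_eq_cube power2_eq_square)
  finally have p: "(c+1/3) powr (3/2) = y^3" .
  have h0: "0 \<le> (x-y)^2*(x+2*y)" using y0 assms by simp
  have e: "3*c+1 = 3*y^2" using y2 by simp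
  have "(x-y)^2*(x+2*y) = x^3 - 3*y^2*x + 2*y^3" by (simp add: algebra_simps power2_eq_square power3_eq_cube)
  then show ?thesis unfolding p e using h0 by linarith
qed

lemma term_bound:
  fixes Q S T \<Delta> m :: real and n :: nat
  assumes "Q > 0" "S > 0" "T > 0" "\<Delta> > 0" "m > 0"
  shows "Q * real n / (2 * pi * S) * \<Delta> / m - T / m * (real n ^ 3 - real n) / sqrt S ^ 3
     \<le> 2 * T / (m * sqrt S ^ 3) * (Q * sqrt S / (6 * pi * T) * \<Delta> + 1 / 3) powr (3 / 2)"
proof -
  define R where "R = sqrt S"
  define c where "c = Q * R / (6 * pi * T) * \<Delta>"
  have R: "R > 0" "R^2 = S" using assms R_def by auto
  have c0: "c \<ge> 0" using assms R c_def by simp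
  have k: "T / (m * R^3) > 0" using assms R by simp
  have "Q * real n / (2 * pi * S) * \<Delta> / m - T / m * (real n ^ 3 - real n) / R ^ 3
      = T / (m * R^3) * ((3*c+1) * real n - real n ^ 3)"
    unfolding c_def using R assms by (simp add: field_simps power2_eq_square power3_eq_cube)
  also have "\<dots> \<le> T / (m * R^3) * (2*(c+1/3) powr (3/2))"
    using cubic_bound[OF c0, of "real n"] k by (intro mult_left_mono) auto
  finally show ?thesis unfolding R_def c_def by simp
qed
theorem mainTheorem2:
  fixes Q T1 T2 \<mu>i \<mu>o R10 R20 \<tau> :: real
    and n :: nat
    and \<mu> \<mu>' :: "real \<Rightarrow> real"
    and f f' :: "real \<Rightarrow> complex"
    and \<sigma> :: complex
  assumes hQ: "Q > 0" and hT1: "T1 > 0" and hT2: "T2 > 0"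
    and hmu: "0 < \<mu>i" "\<mu>i < \<mu>o"
    and hR: "0 < R10" "R10 < R20"
    and hn: "n > 0"
    and htau: "\<tau> \<ge> 0"
  defines "F1 \<equiv> Q * real n / (2 * pi * Rsq Q \<tau> R10) * (\<mu> (zeta1 R10 R20) - \<mu>i)
               - T1 * (real n ^ 3 - real n) / sqrt (Rsq Q \<tau> R10) ^ 3"
    and "F2 \<equiv> Q * real n / (2 * pi * Rsq Q \<tau> R20) * (\<mu>o - \<mu> 1)
               - T2 * (real n ^ 3 - real n) / sqrt (Rsq Q \<tau> R20) ^ 3"
  assumes mu_deriv: "\<And>z. z \<in> {zeta1 R10 R20..1} \<Longrightarrow> (\<mu> has_real_derivative \<mu>' z) (at z within {zeta1 R10 R20..1})"
    and mu'_cont: "continuous_on {zeta1 R10 R20..1} \<mu>'"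
    and mu_bounds: "\<And>z. z \<in> {zeta1 R10 R20..1} \<Longrightarrow> \<mu>i < \<mu> z \<and> \<mu> z < \<mu>o"
    and sigma_nz: "\<sigma> \<noteq> 0"
    and f_nontriv: "\<exists>z\<in>{zeta1 R10 R20..1}. f z \<noteq> 0"
    and f_deriv: "\<And>z. z \<in> {zeta1 R10 R20..1} \<Longrightarrow> (f has_vector_derivative f' z) (at z within {zeta1 R10 R20..1})"
    and ode: "\<And>z. z \<in> {zeta1 R10 R20<..<1} \<Longrightarrow>
        ((\<lambda>x. complex_of_real ((x * R20\<^sup>2 + R0sq Q \<tau>) * \<mu> x) * f' x) has_vector_derivative
          (complex_of_real (real n ^ 2 * R20 ^ 4 / (4 * (z * R20\<^sup>2 + R0sq Q \<tau>)) * \<mu> z) * f z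
           - complex_of_real (Q * real n ^ 2 * R20\<^sup>2 / (4 * pi * (z * R20\<^sup>2 + R0sq Q \<tau>)))
               * (1 / \<sigma>) * complex_of_real (\<mu>' z) * f z)) (at z)"
    and bc1: "complex_of_real (2 * Rsq Q \<tau> R10 / (real n * R20\<^sup>2) * \<mu> (zeta1 R10 R20)) * f' (zeta1 R10 R20)
              = (complex_of_real \<mu>i - complex_of_real F1 / \<sigma>) * f (zeta1 R10 R20)"
    and bc2: "- complex_of_real (2 * Rsq Q \<tau> R20 / (real n * R20\<^sup>2) * \<mu> 1) * f' 1
              = (complex_of_real \<mu>o - complex_of_real F2 / \<sigma>) * f 1"
  shows "Im \<sigma> = 0 \<and>
    (Re \<sigma> > 0 \<longrightarrow>
      Re \<sigma> < Max {Q * real n / (2 * pi * Rsq Q \<tau> R10) * (\<mu> (zeta1 R10 R20) - \<mu>i) / \<mu>i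
                     - T1 / \<mu>i * (real n ^ 3 - real n) / sqrt (Rsq Q \<tau> R10) ^ 3,
                   Q * real n / (2 * pi * Rsq Q \<tau> R20) * (\<mu>o - \<mu> 1) / \<mu>o
                     - T2 / \<mu>o * (real n ^ 3 - real n) / sqrt (Rsq Q \<tau> R20) ^ 3,
                   Q / (pi * R20\<^sup>2) * (1 / \<mu>i) * (SUP z\<in>{zeta1 R10 R20<..<1}. \<mu>' z)}
      \<and> Re \<sigma> < Max {2 * T1 / (\<mu>i * sqrt (Rsq Q \<tau> R10) ^ 3)
                       * (Q * sqrt (Rsq Q \<tau> R10) / (6 * pi * T1) * (\<mu> (zeta1 R10 R20) - \<mu>i) + 1 / 3) powr (3 / 2),
                     2 * T2 / (\<mu>o * sqrt (Rsq Q \<tau> R20) ^ 3)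
                       * (Q * sqrt (Rsq Q \<tau> R20) / (6 * pi * T2) * (\<mu>o - \<mu> 1) + 1 / 3) powr (3 / 2),
                     Q / (pi * R20\<^sup>2) * (1 / \<mu>i) * (SUP z\<in>{zeta1 R10 R20<..<1}. \<mu>' z)})"
proof -
  define a where "a = zeta1 R10 R20"
  define P where "P = (\<lambda>x::real. x * R20\<^sup>2 + R0sq Q \<tau>)"
  define q where "q = (\<lambda>x. P x * \<mu> x)"
  define K where "K = real n * R20\<^sup>2 / 2"
  define cu where "cu = (\<lambda>x. real n ^ 2 * R20 ^ 4 / (4 * P x))"
  define cv where "cv = (\<lambda>x. Q * real n ^ 2 * R20\<^sup>2 / (4 * pi * P x))"
  define G where "G = (\<lambda>z. complex_of_real (cu z * \<mu> z) * f z
           - complex_of_real (cv z) * (1 / \<sigma>) * complex_of_real (\<mu>' z) * f z)"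
  define g where "g = (\<lambda>x. complex_of_real (q x) * f' x)"
  have R20: "R20 > 0" using hR by simp
  have a0: "0 < a" and a1: "a < 1" unfolding a_def zeta1_def using hR
    by (auto simp: divide_less_eq power_strict_mono)
  have R0: "R0sq Q \<tau> \<ge> 0" unfolding R0sq_def using hQ htau by simp
  have Ppos: "P x > 0" if "x \<in> {a..1}" for x
    unfolding P_def using that a0 R0 R20 by (auto intro!: add_pos_nonneg)
  have Pa: "P a = Rsq Q \<tau> R10" unfolding P_def a_def zeta1_def Rsq_def R0sq_def using R20 by simp
  have P1: "P 1 = Rsq Q \<tau> R20" unfolding P_def Rsq_def R0sq_def by simp
  have I: "{zeta1 R10 R20..1} = {a..1}" "{zeta1 R10 R20<..<1} = {a<..<1}" using a_def by auto
  have mub: "\<mu>i < \<mu> x" "\<mu> x < \<mu>o" if "x \<in> {a..1}" for x using mu_bounds that I by auto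
  have mupos: "\<mu> x > 0" if "x \<in> {a..1}" for x using mub[OF that] hmu by simp
  have qpos: "q x > 0" if "x \<in> {a..1}" for x using Ppos[OF that] mupos[OF that] q_def by simp
  have muc: "continuous_on {a..1} \<mu>"
    using mu_deriv I unfolding continuous_on_eq_continuous_within
    by (metis DERIV_continuous)
  have mu'c: "continuous_on {a..1} \<mu>'" using mu'_cont I by simp
  have Pc: "continuous_on {a..1} P" unfolding P_def by (intro continuous_intros)
  have qc: "continuous_on {a..1} q" unfolding q_def by (intro continuous_intros Pc muc)
  have fd: "\<And>x. x \<in> {a..1} \<Longrightarrow> (f has_vector_derivative f' x) (at x within {a..1})"
    using f_deriv I by simp
  have fc: "continuous_on {a..1} f" using fd cont_from_deriv by blast
  have cuc: "continuous_on {a..1} cu" unfolding cu_def using Ppos by (intro continuous_intros Pc) force+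
  have cvc: "continuous_on {a..1} cv" unfolding cv_def using Ppos by (intro continuous_intros Pc) force+
  have Gc: "continuous_on {a..1} G" unfolding G_def
    by (intro continuous_intros cuc cvc muc mu'c fc continuous_on_of_real)
  have gd: "\<And>x. x \<in> {a<..<1} \<Longrightarrow> (g has_vector_derivative G x) (at x)"
    using ode I unfolding g_def G_def q_def P_def cu_def cv_def by simp
  have gc: "continuous_on {a..1} g"
    unfolding g_def by (rule regularity[OF a1 fd qc qpos Gc]) (use gd g_def in auto)
  define h where "h = (\<lambda>x. g x * cnj (f x))"
  define h' where "h' = (\<lambda>x. g x * cnj (f' x) + G x * cnj (f x))"
  have hc: "continuous_on {a..1} h" unfolding h_def by (intro continuous_intros gc fc)
  have hd: "(h has_vector_derivative h' x) (at x)" if x: "x \<in> {a<..<1}" for x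
  proof -
    have "(f has_vector_derivative f' x) (at x within {a..1})" using fd x by auto
    then have "(f has_vector_derivative f' x) (at x)"
      using x at_within_interior[of x "{a..1}"] by (auto simp: has_vector_derivative_def)
    then have "((\<lambda>x. cnj (f x)) has_vector_derivative cnj (f' x)) (at x)"
      by (rule has_vector_derivative_cnj)
    from has_vector_derivative_mult[OF gd[OF x] this] show ?thesis
      unfolding h_def h'_def by simp
  qed
  have hI: "(h' has_integral h 1 - h a) {a..1}"
    using a1 hc hd by (intro fundamental_theorem_of_calculus_interior) auto
  define u where "u = (\<lambda>x. cu x * \<mu> x * (cmod (f x))\<^sup>2)"
  define v where "v = (\<lambda>x. cv x * \<mu>' x * (cmod (f x))\<^sup>2)"
  define w where "w = (\<lambda>x. q x * (cmod (f' x))\<^sup>2)"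
  have h'eq: "h' x = complex_of_real (u x) - complex_of_real (v x) / \<sigma> + complex_of_real (w x)" for x
  proof -
    have e1: "f x * cnj (f x) = complex_of_real ((cmod (f x))\<^sup>2)" by (rule complex_norm_square[symmetric])
    have e2: "f' x * cnj (f' x) = complex_of_real ((cmod (f' x))\<^sup>2)" by (rule complex_norm_square[symmetric])
    have "h' x = complex_of_real (q x) * (f' x * cnj (f' x)) + complex_of_real (cu x * \<mu> x) * (f x * cnj (f x))
       - complex_of_real (cv x * \<mu>' x) * (f x * cnj (f x)) / \<sigma>"
      unfolding h'_def g_def G_def by (simp add: algebra_simps)
    also have "\<dots> = complex_of_real (u x) - complex_of_real (v x) / \<sigma> + complex_of_real (w x)"
      unfolding e1 e2 u_def v_def w_def by (simp add: algebra_simps)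
    finally show ?thesis .
  qed
  have uc: "continuous_on {a..1} u" unfolding u_def by (intro continuous_intros cuc muc fc)
  have vc: "continuous_on {a..1} v" unfolding v_def by (intro continuous_intros cvc mu'c fc)
  define I1 where "I1 = integral {a..1} u"
  define I2 where "I2 = integral {a..1} v"
  have uI: "(u has_integral I1) {a..1}" unfolding I1_def
    using integrable_continuous_interval[OF uc] by (simp add: integrable_integral)
  have vI: "(v has_integral I2) {a..1}" unfolding I2_def
    using integrable_continuous_interval[OF vc] by (simp add: integrable_integral)
  have uI': "((\<lambda>x. complex_of_real (u x)) has_integral complex_of_real I1) {a..1}"
    using has_integral_linear[OF uI bounded_linear_of_real] by (simp add: o_def)
  have vI': "((\<lambda>x. complex_of_real (v x) / \<sigma>) has_integral complex_of_real I2 / \<sigma>) {a..1}"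
    using has_integral_linear[OF vI bounded_linear_of_real] has_integral_mult_left[of _ _ _ "inverse \<sigma>"]
    by (simp add: o_def divide_inverse)
  define J where "J = h 1 - h a - (complex_of_real I1 - complex_of_real I2 / \<sigma>)"
  have wI': "((\<lambda>x. complex_of_real (w x)) has_integral J) {a..1}"
  proof -
    have "((\<lambda>x. h' x - (complex_of_real (u x) - complex_of_real (v x) / \<sigma>)) has_integral J) {a..1}"
      unfolding J_def by (intro has_integral_diff hI uI' vI')
    then show ?thesis by (simp add: h'eq)
  qed
  have wI: "(w has_integral Re J) {a..1}"
    using has_integral_linear[OF wI' bounded_linear_Re] by (simp add: o_def)
  have "((\<lambda>x. 0::real) has_integral Im J) {a..1}"
    using has_integral_linear[OF wI' bounded_linear_Im] by (simp add: o_def)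
  then have ImJ: "Im J = 0" using has_integral_0 has_integral_unique by blast
  define I3 where "I3 = Re J"
  have J: "J = complex_of_real I3" using ImJ I3_def by (simp add: complex_eq_iff)
  have I3: "I3 \<ge> 0" unfolding I3_def
    using has_integral_nonneg[OF wI] qpos unfolding w_def by (simp add: less_imp_le)
  obtain z where z: "z \<in> {a..1}" "f z \<noteq> 0" using f_nontriv I by auto
  have cupos: "cu x > 0" if "x \<in> {a..1}" for x unfolding cu_def using Ppos[OF that] hn R20 by simp
  have I1pos: "I1 > 0"
  proof (rule integral_pos[OF a1 uc _ z(1) _ uI])
    show "\<And>x. x \<in> {a..1} \<Longrightarrow> 0 \<le> u x" unfolding u_def using cupos mupos by (simp add: less_imp_le)
    show "u z \<noteq> 0" unfolding u_def using cupos[OF z(1)] mupos[OF z(1)] z(2) by simp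
  qed
  have Kpos: "K > 0" unfolding K_def using hn R20 by simp
  define N1 where "N1 = (cmod (f 1))\<^sup>2"
  define N0 where "N0 = (cmod (f a))\<^sup>2"
  have c2: "2 * Rsq Q \<tau> R20 / (real n * R20\<^sup>2) * \<mu> 1 = q 1 / K"
    unfolding q_def P1 K_def using hn R20 by (simp add: field_simps)
  have c1: "2 * Rsq Q \<tau> R10 / (real n * R20\<^sup>2) * \<mu> a = q a / K"
    unfolding q_def Pa K_def using hn R20 by (simp add: field_simps)
  have g1: "g 1 = - complex_of_real K * ((complex_of_real \<mu>o - complex_of_real F2 / \<sigma>) * f 1)"
  proof -
    have "- complex_of_real (q 1 / K) * f' 1 = (complex_of_real \<mu>o - complex_of_real F2 / \<sigma>) * f 1"
      by (rule bc2[unfolded c2])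
    then have "complex_of_real K * (- complex_of_real (q 1 / K) * f' 1) = complex_of_real K * ((complex_of_real \<mu>o - complex_of_real F2 / \<sigma>) * f 1)"
      by simp
    then show ?thesis unfolding g_def using Kpos by (simp add: field_simps)
  qed
  have ga: "g a = complex_of_real K * ((complex_of_real \<mu>i - complex_of_real F1 / \<sigma>) * f a)"
  proof -
    have "complex_of_real (q a / K) * f' a = (complex_of_real \<mu>i - complex_of_real F1 / \<sigma>) * f a"
      by (rule bc1[unfolded a_def[symmetric] c1])
    then have "complex_of_real K * (complex_of_real (q a / K) * f' a) = complex_of_real K * ((complex_of_real \<mu>i - complex_of_real F1 / \<sigma>) * f a)"
      by simp
    then show ?thesis unfolding g_def using Kpos by (simp add: field_simps)
  qed
  have h1: "h 1 = - complex_of_real K * (complex_of_real \<mu>o - complex_of_real F2 / \<sigma>) * complex_of_real N1"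
    unfolding h_def g1 N1_def complex_norm_square by (simp add: algebra_simps)
  have ha: "h a = complex_of_real K * (complex_of_real \<mu>i - complex_of_real F1 / \<sigma>) * complex_of_real N0"
    unfolding h_def ga N0_def complex_norm_square by (simp add: algebra_simps)
  define A where "A = I3 + K * \<mu>o * N1 + K * \<mu>i * N0 + I1"
  define B where "B = K * F2 * N1 + K * F1 * N0 + I2"
  have N: "N1 \<ge> 0" "N0 \<ge> 0" unfolding N1_def N0_def by auto
  have Apos: "A > 0" unfolding A_def using I3 I1pos N Kpos hmu
    by (intro add_nonneg_pos add_nonneg_nonneg) auto
  have key: "\<sigma> * complex_of_real A = complex_of_real B"
  proof -
    have E: "complex_of_real I3 = - complex_of_real K * (complex_of_real \<mu>o - complex_of_real F2 / \<sigma>) * complex_of_real N1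
       - complex_of_real K * (complex_of_real \<mu>i - complex_of_real F1 / \<sigma>) * complex_of_real N0
       - complex_of_real I1 + complex_of_real I2 / \<sigma>"
      using J unfolding J_def h1 ha by (simp add: algebra_simps)
    have "\<sigma> * (\<sigma> * complex_of_real A) = \<sigma> * complex_of_real B"
      unfolding A_def B_def using E sigma_nz by (simp add: field_simps)
    then show ?thesis using sigma_nz by simp
  qed
  have sig: "\<sigma> = complex_of_real (B / A)" using key Apos by (simp add: field_simps)
  have ImS: "Im \<sigma> = 0" and ReS: "Re \<sigma> = B / A" using sig by simp_all
  define Sm where "Sm = (SUP z\<in>{a<..<1}. \<mu>' z)"
  have bdd: "bdd_above (\<mu>' ` {a<..<1})"
  proof -
    have "bounded (\<mu>' ` {a..1})" using compact_continuous_image[OF mu'c compact_Icc] compact_imp_bounded by blast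
    then have "bdd_above (\<mu>' ` {a..1})" by (rule bounded_imp_bdd_above)
    then show ?thesis by (rule bdd_above_mono) auto
  qed
  have mu'le: "\<mu>' x \<le> Sm" if x: "x \<in> {a..1}" for x
  proof (rule continuous_le_on_closure[where S="{a<..<1}" and f="\<mu>'" and x=x and a=Sm])
    show "continuous_on (closure {a<..<1}) \<mu>'" using mu'c a1 by simp
    show "x \<in> closure {a<..<1}" using x a1 by simp
    show "\<And>y. y \<in> {a<..<1} \<Longrightarrow> \<mu>' y \<le> Sm" unfolding Sm_def using bdd by (simp add: cSUP_upper)
  qed
  define M1 where "M1 = Q * real n / (2 * pi * Rsq Q \<tau> R10) * (\<mu> a - \<mu>i) / \<mu>i
                     - T1 / \<mu>i * (real n ^ 3 - real n) / sqrt (Rsq Q \<tau> R10) ^ 3"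
  define M2 where "M2 = Q * real n / (2 * pi * Rsq Q \<tau> R20) * (\<mu>o - \<mu> 1) / \<mu>o
                     - T2 / \<mu>o * (real n ^ 3 - real n) / sqrt (Rsq Q \<tau> R20) ^ 3"
  define M3 where "M3 = Q / (pi * R20\<^sup>2) * (1 / \<mu>i) * Sm"
  have RS1: "Rsq Q \<tau> R10 > 0" using Pa Ppos[of a] a1 by simp
  have RS2: "Rsq Q \<tau> R20 > 0" using P1 Ppos[of 1] a1 by simp
  have F1M: "F1 = M1 * \<mu>i" unfolding F1_def M1_def a_def using hmu RS1 by (simp add: field_simps)
  have F2M: "F2 = M2 * \<mu>o" unfolding F2_def M2_def using hmu RS2 by (simp add: field_simps)
  have cvpos: "cv x > 0" if "x \<in> {a..1}" for x unfolding cv_def using Ppos[OF that] hn R20 hQ by simp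
  have bound: "B / A < max M1 (max M2 M3)" if pos: "B / A > 0"
  proof -
    define M where "M = max M1 (max M2 M3)"
    have Bpos: "B > 0" using pos Apos by (simp add: zero_less_divide_iff)
    show ?thesis
    proof (cases "M \<le> 0")
      case True
      then have "M1 \<le> 0" "M2 \<le> 0" "M3 \<le> 0" unfolding M_def by auto
      then have F: "F1 \<le> 0" "F2 \<le> 0" using F1M F2M hmu by (auto simp: mult_nonpos_nonneg)
      have cc: "Q / (pi * R20\<^sup>2) * (1 / \<mu>i) > 0" using hQ R20 hmu by simp
      have "Sm \<le> 0"
      proof (rule ccontr)
        assume "\<not> Sm \<le> 0"
        then have "0 < Q / (pi * R20\<^sup>2) * (1 / \<mu>i) * Sm" using mult_pos_pos[OF cc, of Sm] by linarith
        then show False using \<open>M3 \<le> 0\<close> unfolding M3_def by linarith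
      qed
      then have vn: "v x \<le> 0" if "x \<in> {a..1}" for x
        unfolding v_def using mu'le[OF that] cvpos[OF that]
        by (intro mult_nonpos_nonneg mult_nonneg_nonpos) auto
      have "0 \<le> - I2"
        using has_integral_nonneg[OF has_integral_neg[OF vI]] vn by force
      then have "B \<le> 0" unfolding B_def using F Kpos N
        by (smt (verit) mult_nonneg_nonneg mult_nonpos_nonneg mult_nonneg_nonpos)
      then show ?thesis using Bpos by simp
    next
      case False
      then have Mpos: "M > 0" by simp
      have "M3 \<le> M" unfolding M_def by simp
      then have QS: "Q * Sm \<le> M * (pi * R20\<^sup>2 * \<mu>i)"
        unfolding M3_def using hQ R20 hmu by (simp add: field_simps)
      define D where "D = (\<lambda>x. M * (pi * R20\<^sup>2) * \<mu> x - Q * \<mu>' x)"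
      have Dpos: "D x > 0" if x: "x \<in> {a..1}" for x
      proof -
        have "Q * \<mu>' x \<le> Q * Sm" using mu'le[OF x] hQ by simp
        also have "\<dots> \<le> M * (pi * R20\<^sup>2 * \<mu>i)" by (rule QS)
        also have "\<dots> < M * (pi * R20\<^sup>2) * \<mu> x" using mub(1)[OF x] Mpos R20 by simp
        finally show ?thesis unfolding D_def by simp
      qed
      define \<phi> where "\<phi> = (\<lambda>x. M * u x - v x)"
      have \<phi>eq: "\<phi> x = cv x * (cmod (f x))\<^sup>2 * D x / Q" if x: "x \<in> {a..1}" for x
        unfolding \<phi>_def u_def v_def D_def cu_def cv_def using hQ Ppos[OF x]
        by (simp add: field_simps power2_eq_square power4_eq_xxxx)
      have \<phi>I: "(\<phi> has_integral M * I1 - I2) {a..1}"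
        unfolding \<phi>_def by (intro has_integral_diff has_integral_mult_right uI vI)
      have \<phi>pos: "M * I1 - I2 > 0"
      proof (rule integral_pos[OF a1 _ _ z(1) _ \<phi>I])
        show "continuous_on {a..1} \<phi>" unfolding \<phi>_def by (intro continuous_intros uc vc)
        show "0 \<le> \<phi> x" if "x \<in> {a..1}" for x
          unfolding \<phi>eq[OF that] using cvpos[OF that] Dpos[OF that] hQ by simp
        show "\<phi> z \<noteq> 0"
          unfolding \<phi>eq[OF z(1)] using cvpos[OF z(1)] Dpos[OF z(1)] hQ z(2) by simp
      qed
      have "M1 \<le> M" "M2 \<le> M" unfolding M_def by auto
      then have "F1 \<le> M * \<mu>i" "F2 \<le> M * \<mu>o" using F1M F2M hmu by auto
      then have t: "K * N1 * F2 \<le> K * N1 * (M * \<mu>o)" "K * N0 * F1 \<le> K * N0 * (M * \<mu>i)"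
        using Kpos N by (auto intro!: mult_left_mono)
      have "0 \<le> M * I3" using Mpos I3 by simp
      then have "B < M * A" unfolding B_def A_def using t \<phi>pos by (simp add: algebra_simps)
      then show ?thesis using Apos unfolding M_def by (simp add: divide_less_eq)
    qed
  qed
  define M1' where "M1' = 2 * T1 / (\<mu>i * sqrt (Rsq Q \<tau> R10) ^ 3)
                       * (Q * sqrt (Rsq Q \<tau> R10) / (6 * pi * T1) * (\<mu> a - \<mu>i) + 1 / 3) powr (3 / 2)"
  define M2' where "M2' = 2 * T2 / (\<mu>o * sqrt (Rsq Q \<tau> R20) ^ 3)
                       * (Q * sqrt (Rsq Q \<tau> R20) / (6 * pi * T2) * (\<mu>o - \<mu> 1) + 1 / 3) powr (3 / 2)"
  have b1: "M1 \<le> M1'" unfolding M1_def M1'_def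
    using a1 mub(1)[of a] by (intro term_bound hQ RS1 hT1 hmu) auto
  have b2: "M2 \<le> M2'" unfolding M2_def M2'_def
    using a1 mub(2)[of 1] hmu by (intro term_bound hQ RS2 hT2) auto
  have goal: "Im \<sigma> = 0 \<and> (Re \<sigma> > 0 \<longrightarrow> Re \<sigma> < Max {M1, M2, M3} \<and> Re \<sigma> < Max {M1', M2', M3})"
  proof -
    have "Re \<sigma> < max M1' (max M2' M3)" if "Re \<sigma> > 0"
      using bound[of] that ReS b1 b2 by (smt (verit, best))
    then show ?thesis using ImS ReS bound by simp
  qed
  then show ?thesis unfolding M1_def M2_def M3_def M1'_def M2'_def Sm_def a_def .
qed

end
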